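(* For integers $n,k\geqslant 1$, let $\mathfrak{C}_{n,k}$ be the set of words $\omega=(\omega_1,\dots,\omega_n)$ of length $n$ on the alphabet $\{1,\dots,k\}$ that avoid both patterns $010$ and $000$, contain every letter of $\{1,\dots,k\}$, and satisfy $\omega_1=k$; let $\mathfrak{c}_{n,k}=\#\mathfrak{C}_{n,k}$, with $\mathfrak{c}_{0,k}=0$ for $k\geqslant1$. Then for all $n,k\geqslant 2$, $$\mathfrak{c}_{n,k}=(n-1)\,\mathfrak{c}_{n-1,k-1}+(n-2)\,\mathfrak{c}_{n-2,k-1}.$$
   Context: A word contains a pattern $p$ if some subsequence of it is order-isomorphic to $p$; otherwise it avoids $p$. Avoiding $010$ means no $i<j<l$ with $\omega_i=\omega_l<\omega_j$; avoiding $000$ means no letter occurs three or more times. *)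

theory Defs
  imports Main
begin

definition avoids_010 :: "nat list \<Rightarrow> bool" where
  "avoids_010 w \<longleftrightarrow> \<not> (\<exists>i j l. i < j \<and> j < l \<and> l < length w \<and>
      w ! i = w ! l \<and> w ! l < w ! j)"

definition avoids_000 :: "nat list \<Rightarrow> bool" where
  "avoids_000 w \<longleftrightarrow> \<not> (\<exists>i j l. i < j \<and> j < l \<and> l < length w \<and>
      w ! i = w ! j \<and> w ! j = w ! l)"

definition Cset :: "nat \<Rightarrow> nat \<Rightarrow> nat list set" where
  "Cset n k = {w. length w = n \<and> set w = {1..k} \<and> avoids_010 w \<and> avoids_000 w
      \<and> w \<noteq> [] \<and> hd w = k}"

definition cnum :: "nat \<Rightarrow> nat \<Rightarrow> nat" where
  "cnum n k = card (Cset n k)"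

end

theory Submission
  imports Defs
begin

definition badR :: "(nat \<Rightarrow> nat \<Rightarrow> nat \<Rightarrow> bool) \<Rightarrow> nat list \<Rightarrow> bool" where
  "badR R w \<longleftrightarrow> (\<exists>i j l. i < j \<and> j < l \<and> l < length w \<and> R (w!i) (w!j) (w!l))"

abbreviation "R010 \<equiv> (\<lambda>a b c. a = c \<and> c < (b::nat))"
abbreviation "R000 \<equiv> (\<lambda>a b c. a = b \<and> b = (c::nat))"

lemma av010: "avoids_010 w \<longleftrightarrow> \<not> badR R010 w"
  unfolding avoids_010_def badR_def by auto

lemma av000: "avoids_000 w \<longleftrightarrow> \<not> badR R000 w"
  unfolding avoids_000_def badR_def by auto

lemma badR_map: "badR R (map f v) \<longleftrightarrow> badR (\<lambda>a b c. R (f a) (f b) (f c)) v"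
  unfolding badR_def
  apply (rule iffI)
   apply (elim exE conjE, rule_tac x=i in exI, rule_tac x=j in exI, rule_tac x=l in exI, simp)+
  done

lemma badR_Suc010: "badR R010 (map Suc v) \<longleftrightarrow> badR R010 v" by (simp add: badR_map)
lemma badR_Suc000: "badR R000 (map Suc v) \<longleftrightarrow> badR R000 v" by (simp add: badR_map)

lemma badR_del:
  assumes "badR R (xs @ ys)" shows "badR R (xs @ zs @ ys)"
proof -
  obtain i j l where *: "i < j" "j < l" "l < length (xs @ ys)"
    "R ((xs@ys)!i) ((xs@ys)!j) ((xs@ys)!l)"
    using assms unfolding badR_def by blast
  define h where "h p = (if p < length xs then p else p + length zs)" for p
  have nth: "(xs@zs@ys)!(h p) = (xs@ys)!p" if "p < length (xs@ys)" for p
    using that by (auto simp: h_def nth_append)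
  have mono: "h p < h q" if "p < q" for p q using that by (auto simp: h_def)
  have len: "h l < length (xs@zs@ys)" using *(3) by (auto simp: h_def)
  show ?thesis unfolding badR_def
    apply (rule exI[of _ "h i"], rule exI[of _ "h j"], rule exI[of _ "h l"])
    using * nth mono len by auto
qed

lemma badR_back:
  assumes "i < j" "j < l" "l < length (xs @ zs @ ys)"
    "\<And>p. p \<in> {i,j,l} \<Longrightarrow> \<not> (length xs \<le> p \<and> p < length xs + length zs)"
    "R ((xs@zs@ys)!i) ((xs@zs@ys)!j) ((xs@zs@ys)!l)"
  shows "badR R (xs @ ys)"
proof -
  define g where "g p = (if p < length xs then p else p - length zs)" for p
  have nth: "(xs@zs@ys)!p = (xs@ys)!(g p)"
    if "p < length (xs@zs@ys)" "\<not> (length xs \<le> p \<and> p < length xs + length zs)" for p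
    using that by (auto simp: g_def nth_append add.commute)
  have mono: "g p < g q" if "p < q"
    "\<not> (length xs \<le> p \<and> p < length xs + length zs)"
    "\<not> (length xs \<le> q \<and> q < length xs + length zs)" for p q
    using that by (auto simp: g_def)
  have "\<not> (length xs \<le> l \<and> l < length xs + length zs)" using assms(4) by blast
  hence len: "g l < length (xs@ys)" using assms(3) by (auto simp: g_def)
  show ?thesis unfolding badR_def
    apply (rule exI[of _ "g i"], rule exI[of _ "g j"], rule exI[of _ "g l"])
    using assms nth mono len by auto
qed

lemma ins_lemma:
  assumes ge: "\<forall>x\<in>set xs \<union> set ys. 2 \<le> x" and m: "m \<le> 2"
    and a1: "\<not> badR R010 (xs@ys)" and a0: "\<not> badR R000 (xs@ys)"
  shows "\<not> badR R010 (xs @ replicate m 1 @ ys) \<and> \<not> badR R000 (xs @ replicate m 1 @ ys)"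
proof -
  let ?w = "xs @ replicate m 1 @ ys"
  let ?B = "\<lambda>p. length xs \<le> p \<and> p < length xs + m"
  have v1: "?w!p = 1" if "?B p" for p using that by (auto simp: nth_append)
  have v2: "?w!p \<ge> 2" if "p < length ?w" "\<not> ?B p" for p
  proof (cases "p < length xs")
    case True thus ?thesis using ge nth_mem[OF True] by (auto simp: nth_append)
  next
    case False
    hence "p - length xs - m < length ys" using that by auto
    thus ?thesis using ge False that nth_mem[of "p - length xs - m" ys] by (auto simp: nth_append)
  qed
  have "\<not> badR R010 ?w"
  proof
    assume "badR R010 ?w"
    then obtain i j l where *: "i < j" "j < l" "l < length ?w" "?w!i = ?w!l" "?w!l < ?w!j"
      unfolding badR_def by blast
    have nj: "\<not> ?B j"
    proof
      assume "?B j" then have "?w!j = 1" by (rule v1)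
      moreover have "?w!l \<ge> 1" using v1 v2[of l] *(3) by (cases "?B l") auto
      ultimately show False using * by auto
    qed
    have nl: "\<not> ?B l \<and> \<not> ?B i"
    proof (rule ccontr)
      assume "\<not> (\<not> ?B l \<and> \<not> ?B i)"
      hence "?w!l = 1"
        using v1 v2[of i] v2[of l] * by (metis less_trans numeral_le_one_iff semiring_norm(69))
      hence "?B l \<and> ?B i" using v2[of l] v2[of i] * by auto
      thus False using nj * by auto
    qed
    have "badR R010 (xs @ ys)"
      by (rule badR_back[of i j l xs "replicate m 1" ys]) (use * nj nl in auto)
    thus False using a1 by simp
  qed
  moreover have "\<not> badR R000 ?w"
  proof
    assume "badR R000 ?w"
    then obtain i j l where *: "i < j" "j < l" "l < length ?w" "?w!i = ?w!j" "?w!j = ?w!l"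
      unfolding badR_def by blast
    show False
    proof (cases "?B i \<or> ?B j \<or> ?B l")
      case True
      hence "?w!i = 1 \<or> ?w!j = 1 \<or> ?w!l = 1" using v1 by blast
      hence "?w!i = 1 \<and> ?w!j = 1 \<and> ?w!l = 1" using * by auto
      hence "?B i \<and> ?B l" using v2[of i] v2[of l] * by auto
      thus False using * m by auto
    next
      case False
      have "badR R000 (xs @ ys)"
        by (rule badR_back[of i j l xs "replicate m 1" ys]) (use * False in auto)
      thus False using a0 by simp
    qed
  qed
  ultimately show ?thesis by blast
qed

definition F :: "nat \<Rightarrow> nat \<times> nat list \<Rightarrow> nat list" where
  "F m p = take (fst p) (map Suc (snd p)) @ replicate m 1 @ drop (fst p) (map Suc (snd p))"

lemma Cset_finite: "finite (Cset n k)"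
proof (rule finite_subset)
  show "Cset n k \<subseteq> {w. set w \<subseteq> {1..k} \<and> length w = n}" unfolding Cset_def by auto
  show "finite {w. set w \<subseteq> {1..k} \<and> length w = n}" by (rule finite_lists_length_eq) simp
qed

lemma uniq: "x \<notin> set xs \<Longrightarrow> x \<notin> set xs' \<Longrightarrow> xs @ x # ys = xs' @ x # ys' \<Longrightarrow> xs = xs' \<and> ys = ys'"
proof (induction xs arbitrary: xs')
  case Nil thus ?case by (cases xs') auto
next
  case (Cons a xs) thus ?case by (cases xs') auto
qed

lemma pred_img: "(k::nat) \<ge> 2 \<Longrightarrow> (\<lambda>x. x - 1) ` {2..k} = {1..k-1}"
  apply (rule set_eqI)
  apply (auto simp: image_iff)
  apply (rule_tac x="Suc x" in bexI)
  by auto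

lemma suc_img: "(k::nat) \<ge> 2 \<Longrightarrow> insert 1 (Suc ` {1..k-1}) = {1..k}"
  by (auto simp: image_Suc_atLeastAtMost)

lemma memF:
  assumes k: "k \<ge> 2" and m: "m \<in> {1,2}" and n: "n \<ge> 2"
    and v: "v \<in> Cset (n-m) (k-1)" and i: "1 \<le> i" "i \<le> n - m"
  shows "F m (i,v) \<in> Cset n k"
proof -
  let ?u = "map Suc v"
  let ?xs = "take i ?u" and ?ys = "drop i ?u"
  have lv: "length v = n - m" and sv: "set v = {1..k-1}" and a1: "avoids_010 v"
    and a0: "avoids_000 v" and ne: "v \<noteq> []" and hv: "hd v = k - 1"
    using v unfolding Cset_def by auto
  have w: "F m (i,v) = ?xs @ replicate m 1 @ ?ys" by (simp add: F_def)
  have len: "length (F m (i,v)) = n" using lv i m n by (auto simp: F_def)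
  have su: "set ?xs \<union> set ?ys = set ?u"
    by (metis append_take_drop_id set_append)
  have "set (F m (i,v)) = insert 1 (set ?xs \<union> set ?ys)" using m by (auto simp: F_def)
  also have "\<dots> = insert 1 (Suc ` {1..k-1})" using su sv by simp
  also have "\<dots> = {1..k}" using k by (rule suc_img)
  finally have set: "set (F m (i,v)) = {1..k}" .
  have xne: "?xs \<noteq> []" using i lv ne by auto
  have hd: "hd (F m (i,v)) = k" using xne ne hv k
    by (simp add: F_def hd_map)
  have ge: "\<forall>x\<in>set ?xs \<union> set ?ys. 2 \<le> x" using su sv by auto
  have b1: "\<not> badR R010 (?xs @ ?ys)" using a1 by (simp add: av010 badR_Suc010)
  have b0: "\<not> badR R000 (?xs @ ?ys)" using a0 by (simp add: av000 badR_Suc000)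
  have "m \<le> 2" using m by auto
  from ins_lemma[OF ge this b1 b0] have "avoids_010 (F m (i,v)) \<and> avoids_000 (F m (i,v))"
    by (simp add: w av010 av000)
  thus ?thesis using len set hd xne unfolding Cset_def by (auto simp: F_def)
qed

lemma injF:
  assumes m: "m \<in> {1,2}"
  shows "inj_on (F m) ({1..n-m} \<times> Cset (n-m) (k-1))"
proof (rule inj_onI, clarify)
  fix i v i' v'
  assume i: "i \<in> {1..n-m}" "i' \<in> {1..n-m}" and v: "v \<in> Cset (n-m) (k-1)" "v' \<in> Cset (n-m) (k-1)"
    and eq: "F m (i,v) = F m (i',v')"
  have lv: "length v = n - m" "length v' = n - m" using v unfolding Cset_def by auto
  have n1: "1 \<notin> set (take i (map Suc v))" "1 \<notin> set (take i' (map Suc v'))"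
    using v unfolding Cset_def by (auto dest!: in_set_takeD)
  obtain r where r: "replicate m (1::nat) = 1 # r" using m by (cases m) auto
  from eq have "take i (map Suc v) @ 1 # (r @ drop i (map Suc v)) = take i' (map Suc v') @ 1 # (r @ drop i' (map Suc v'))"
    using eq unfolding F_def fst_conv snd_conv r by simp
  from uniq[OF n1 this] have e: "take i (map Suc v) = take i' (map Suc v')" "drop i (map Suc v) = drop i' (map Suc v')"
    by auto
  hence "map Suc v = map Suc v'" by (metis append_take_drop_id)
  hence vv: "v = v'" by (simp add: inj_map_eq_map)
  have "length (take i (map Suc v)) = i" "length (take i' (map Suc v')) = i'" using i lv by auto
  hence "i = i'" using e by metis
  thus "i = i' \<and> v = v'" using vv by simp
qed

lemma disjF: "F 1 ` ({1..n-1} \<times> Cset (n-1) (k-1)) \<inter> F 2 ` ({1..n-2} \<times> Cset (n-2) (k-1)) = {}"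
proof (rule equals0I, clarify)
  fix i v i' v'
  assume v: "v \<in> Cset (n-1) (k-1)" "v' \<in> Cset (n-2) (k-1)" and eq: "F 1 (i,v) = F 2 (i',v')"
  have n1: "1 \<notin> set (take i (map Suc v))" "1 \<notin> set (take i' (map Suc v'))"
    "1 \<notin> set (drop i (map Suc v))"
    using v unfolding Cset_def by (auto dest!: in_set_takeD in_set_dropD)
  from eq have "take i (map Suc v) @ 1 # drop i (map Suc v) = take i' (map Suc v') @ 1 # (1 # drop i' (map Suc v'))"
    by (simp add: F_def numeral_2_eq_2)
  from uniq[OF n1(1,2) this] n1(3) show False by auto
qed

lemma decomp:
  assumes k: "k \<ge> 2" and w: "w \<in> Cset n k" and wd: "w = xs @ replicate m 1 @ ys"
    and n1: "1 \<notin> set xs" "1 \<notin> set ys" and xne: "xs \<noteq> []" and m: "m \<ge> 1"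
  shows "(length xs, map (\<lambda>x. x - 1) (xs @ ys)) \<in> {1..n-m} \<times> Cset (n-m) (k-1)
    \<and> w = F m (length xs, map (\<lambda>x. x - 1) (xs @ ys))"
proof -
  let ?v = "map (\<lambda>x. x - 1) (xs @ ys)"
  have lw: "length w = n" and sw: "set w = {1..k}" and a1: "avoids_010 w"
    and a0: "avoids_000 w" and hw: "hd w = k"
    using w unfolding Cset_def by auto
  have sw2: "set w = insert 1 (set xs \<union> set ys)" using wd m by (cases m) auto
  have sxy: "set xs \<union> set ys = {2..k}"
  proof (rule set_eqI)
    fix x show "x \<in> set xs \<union> set ys \<longleftrightarrow> x \<in> {2..k}"
    proof
      assume x: "x \<in> set xs \<union> set ys"
      hence "x \<noteq> 1" using n1 by blast
      moreover have "x \<in> {1..k}" using x sw sw2 by blast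
      ultimately show "x \<in> {2..k}" by simp
    next
      assume "x \<in> {2..k}"
      hence "x \<in> set w" "x \<noteq> 1" using sw by auto
      thus "x \<in> set xs \<union> set ys" using sw2 by blast
    qed
  qed
  have mv: "map Suc ?v = xs @ ys" unfolding map_map
  proof (rule map_idI)
    fix x assume "x \<in> set (xs @ ys)"
    hence "x \<ge> 2" using sxy by auto
    thus "(Suc \<circ> (\<lambda>x. x - 1)) x = x" by simp
  qed
  have sv: "set ?v = {1..k-1}"
  proof -
    have "set ?v = (\<lambda>x. x - 1) ` (set xs \<union> set ys)" by (simp add: image_Un)
    also have "\<dots> = {1..k-1}" unfolding sxy by (rule pred_img[OF k])
    finally show ?thesis .
  qed
  have "\<not> badR R010 w" using a1 av010 by blast
  hence "\<not> badR R010 (xs @ replicate m 1 @ ys)" unfolding wd .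
  hence b1: "\<not> badR R010 (xs @ ys)" using badR_del[of R010 xs ys "replicate m 1"] by blast
  have "\<not> badR R000 w" using a0 av000 by blast
  hence "\<not> badR R000 (xs @ replicate m 1 @ ys)" unfolding wd .
  hence b0: "\<not> badR R000 (xs @ ys)" using badR_del[of R000 xs ys "replicate m 1"] by blast
  have "avoids_010 ?v" using b1 mv badR_Suc010[of ?v] av010[of ?v] by simp
  moreover have "avoids_000 ?v" using b0 mv badR_Suc000[of ?v] av000[of ?v] by simp
  moreover have "length ?v = n - m" using lw wd by auto
  moreover have "hd ?v = k - 1" using hw wd xne by (cases xs) auto
  ultimately have "?v \<in> Cset (n-m) (k-1)" using sv xne unfolding Cset_def by auto
  moreover have "1 \<le> length xs" using xne by (cases xs) auto
  moreover have "length xs \<le> n - m" using lw wd by auto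
  moreover have "w = F m (length xs, ?v)" using wd mv by (simp add: F_def)
  ultimately show ?thesis by auto
qed

lemma surjF:
  assumes k: "k \<ge> 2" and w: "w \<in> Cset n k"
  shows "w \<in> F 1 ` ({1..n-1} \<times> Cset (n-1) (k-1)) \<union> F 2 ` ({1..n-2} \<times> Cset (n-2) (k-1))"
proof -
  have sw: "set w = {1..k}" and a1: "avoids_010 w" and a0: "avoids_000 w" and hw: "hd w = k"
    and wne: "w \<noteq> []"
    using w unfolding Cset_def by auto
  have "1 \<in> set w" using sw k by auto
  then obtain xs ys where wd: "w = xs @ 1 # ys" and n1: "1 \<notin> set xs"
    using split_list_first by metis
  have xne: "xs \<noteq> []" using wd hw k by auto
  show ?thesis
  proof (cases "1 \<in> set ys")
    case False
    have "w = xs @ replicate 1 1 @ ys" using wd by simp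
    from decomp[OF k w this n1 False xne] show ?thesis by force
  next
    case True
    then obtain ys1 ys2 where yd: "ys = ys1 @ 1 # ys2" and n2: "1 \<notin> set ys1"
      using split_list_first by metis
    have ys1: "ys1 = []"
    proof (rule ccontr)
      assume ne: "ys1 \<noteq> []"
      let ?a = "length xs"
      have "hd ys1 \<in> set w" using ne wd yd by auto
      moreover have "hd ys1 \<noteq> 1" using n2 hd_in_set[OF ne] by metis
      ultimately have "hd ys1 \<ge> 2" using sw by fastforce
      moreover have "w ! ?a = 1" "w ! (?a + 1) = hd ys1" "w ! (?a + 1 + length ys1) = 1"
        using wd yd ne by (auto simp: nth_append hd_conv_nth)
      moreover have "?a + 1 + length ys1 < length w" using wd yd by simp
      ultimately have "\<not> avoids_010 w" unfolding avoids_010_def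
        apply simp
        apply (rule exI[of _ ?a], rule exI[of _ "?a+1"], rule conjI, simp)
        apply (rule exI[of _ "?a + 1 + length ys1"])
        using ne by auto
      thus False using a1 by simp
    qed
    have n3: "1 \<notin> set ys2"
    proof
      assume "1 \<in> set ys2"
      then obtain q where q: "q < length ys2" "ys2 ! q = 1" by (auto simp: in_set_conv_nth)
      let ?a = "length xs"
      have "w ! ?a = 1" "w ! (?a + 1) = 1" "w ! (?a + 2 + q) = 1" "?a + 2 + q < length w"
        using wd yd ys1 q by (auto simp: nth_append)
      hence "\<not> avoids_000 w" unfolding avoids_000_def not_not
        by (intro exI[of _ ?a] exI[of _ "?a+1"] exI[of _ "?a+2+q"]) simp
      thus False using a0 by simp
    qed
    have "w = xs @ replicate 2 1 @ ys2" using wd yd ys1 by (simp add: numeral_2_eq_2)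
    from decomp[OF k w this n1 n3 xne] show ?thesis by force
  qed
qed

theorem mainTheorem3:
  fixes n k :: nat
  assumes "n \<ge> 2" and "k \<ge> 2"
  shows "cnum n k = (n - 1) * cnum (n - 1) (k - 1) + (n - 2) * cnum (n - 2) (k - 1)"
proof -
  let ?A1 = "{1..n-1} \<times> Cset (n-1) (k-1)" and ?A2 = "{1..n-2} \<times> Cset (n-2) (k-1)"
  have eq: "Cset n k = F 1 ` ?A1 \<union> F 2 ` ?A2"
  proof
    show "Cset n k \<subseteq> F 1 ` ?A1 \<union> F 2 ` ?A2" using surjF[OF assms(2)] by blast
    show "F 1 ` ?A1 \<union> F 2 ` ?A2 \<subseteq> Cset n k"
      using memF[OF assms(2) _ assms(1), of 1] memF[OF assms(2) _ assms(1), of 2] by auto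
  qed
  have f1: "finite ?A1" "finite ?A2" using Cset_finite by auto
  have "cnum n k = card (F 1 ` ?A1) + card (F 2 ` ?A2)"
    unfolding cnum_def eq by (rule card_Un_disjoint) (use f1 disjF in auto)
  also have "\<dots> = card ?A1 + card ?A2"
    using card_image[OF injF[of 1]] card_image[OF injF[of 2]] by simp
  also have "\<dots> = (n - 1) * cnum (n - 1) (k - 1) + (n - 2) * cnum (n - 2) (k - 1)"
    by (simp add: card_cartesian_product cnum_def)
  finally show ?thesis .
qed

end
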